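(* Let $\beta>0$, $v\in\mathcal{V}$, let $\alpha_v\in\mathcal{M}_v$ be given by $\alpha_v(s)=1$ for all $s\in[0,v]$, and let $\lambda_*=-\frac{\beta^2\xi'(v_* )}{2}=-\frac{\beta^2pv_*^{p-1}}{2}$. Then: (i) if $v\neq v_*$, then $\inf_{\lambda\in\mathbb{R}}\mathcal{Q}_{\beta,v}(\alpha_v,\lambda)<0$; (ii) if $v=v_*$, then $\inf_{\lambda\in\mathbb{R}}\mathcal{Q}_{\beta,v}(\alpha_v,\lambda)=0$, and the infimum is attained at $\lambda=\lambda_*$.
   Context: Let $p\ge2$, $\mu$ a centered probability measure on a bounded Borel set $\Lambda\subset\mathbb{R}$, $v_*=\int a^2\mu(da)$, $\mathcal{V}=\{u^2:u\in\Lambda\}$, $\xi(s)=s^p$, and $\mathcal{M}_v$ the set of cumulative distribution functions on $[0,v]$. For $\alpha\in\mathcal{M}_v$, $\lambda\in\mathbb{R}$, let $\Phi_{\beta,v,\alpha}(s,x,\lambda)$ be the weak solution on $[0,v]\times\mathbb{R}$ of $\partial_s\Phi=-\frac{\beta^2\xi''(s)}{2}(\partial_{xx}\Phi+\alpha(s)(\partial_x\Phi)^2)$ with $\Phi(v,x,\lambda)=\log\int e^{xa+\lambda a^2}\mu(da)$; $\mathcal{P}_{\beta,v}(\alpha,\lambda)=\Phi_{\beta,v,\alpha}(0,0,\lambda)-\lambda v-\frac{\beta^2}{2}\int_0^v\alpha(s)\xi''(s)s\,ds$ and $\mathcal{Q}_{\beta,v}(\alpha,\lambda)=\mathcal{P}_{\beta,v}(\alpha,\lambda)-\frac{\beta^2v^p}{2}$.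 *)

theory Defs
  imports "HOL-Analysis.Analysis" "HOL-Probability.Probability"
begin

definition xi :: "nat \<Rightarrow> real \<Rightarrow> real" where
  "xi p s = s ^ p"

definition xi2 :: "nat \<Rightarrow> real \<Rightarrow> real" where
  "xi2 p s = real p * (real p - 1) * s ^ (p - 2)"

definition parisi_sol ::
  "real \<Rightarrow> nat \<Rightarrow> real \<Rightarrow> (real \<Rightarrow> real) \<Rightarrow> real measure \<Rightarrow> real
   \<Rightarrow> (real \<Rightarrow> real \<Rightarrow> real) \<Rightarrow> bool" where
  "parisi_sol \<beta> p v \<alpha> \<mu> lam F \<longleftrightarrow>
     continuous_on ({0..v} \<times> UNIV) (\<lambda>(s, x). F s x) \<and>
     (\<forall>x. F v x = ln (\<integral>a. exp (x * a + lam * a\<^sup>2) \<partial>\<mu>)) \<and>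
     (\<exists>Fs Fx Fxx B.
        \<forall>s\<in>{0<..<v}. \<forall>x.
          ((\<lambda>t. F t x) has_real_derivative Fs s x) (at s) \<and>
          (F s has_real_derivative Fx s x) (at x) \<and>
          (Fx s has_real_derivative Fxx s x) (at x) \<and>
          Fs s x = - (\<beta>\<^sup>2 * xi2 p s / 2) * (Fxx s x + \<alpha> s * (Fx s x)\<^sup>2) \<and>
          \<bar>Fx s x\<bar> \<le> B)"

(* P_{beta,v}(alpha,lambda) given Phi_{beta,v,alpha}(0,0,lambda) = phi0 *)
definition parisi_P ::
  "real \<Rightarrow> nat \<Rightarrow> real \<Rightarrow> (real \<Rightarrow> real) \<Rightarrow> real \<Rightarrow> real \<Rightarrow> real" where
  "parisi_P \<beta> p v \<alpha> lam phi0 =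
     phi0 - lam * v - \<beta>\<^sup>2 / 2 * integral {0..v} (\<lambda>s. \<alpha> s * xi2 p s * s)"

definition parisi_Q ::
  "real \<Rightarrow> nat \<Rightarrow> real \<Rightarrow> (real \<Rightarrow> real) \<Rightarrow> real \<Rightarrow> real \<Rightarrow> real" where
  "parisi_Q \<beta> p v \<alpha> lam phi0 = parisi_P \<beta> p v \<alpha> lam phi0 - \<beta>\<^sup>2 * v ^ p / 2"

end

theory Submission
  imports Defs
begin


lemma exp_lip: "\<bar>exp y - exp y'\<bar> \<le> exp (max y y') * \<bar>y - y'\<bar>" for y y' :: real
proof -
  have *: "exp a - exp b \<le> exp a * (a - b)" if "b \<le> a" for a b :: real
  proof -
    have "1 + (b - a) \<le> exp (b - a)" by (rule exp_ge_add_one_self)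
    hence "exp a * (1 + (b - a)) \<le> exp a * exp (b - a)" by simp
    also have "\<dots> = exp b" by (simp add: exp_diff)
    finally show ?thesis by (simp add: algebra_simps)
  qed
  show ?thesis
  proof (cases "y' \<le> y")
    case True
    with *[OF True] show ?thesis by (simp add: max_def)
  next
    case False
    with *[of y y'] show ?thesis by (simp add: max_def abs_if)
  qed
qed

lemma exp_taylor: "\<bar>exp z - 1 - z\<bar> \<le> z\<^sup>2 * exp \<bar>z\<bar>" for z :: real
proof -
  have a: "0 \<le> exp z - 1 - z" using exp_ge_add_one_self[of z] by linarith
  have "1 + (-z) \<le> exp (-z)" by (rule exp_ge_add_one_self)
  hence "exp z * (1 - z) \<le> exp z * exp (-z)" by simp
  hence b: "exp z - 1 - z \<le> z * (exp z - 1)" by (simp add: exp_minus algebra_simps)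
  have "\<bar>exp z - exp 0\<bar> \<le> exp (max z 0) * \<bar>z - 0\<bar>" by (rule exp_lip)
  also have "\<dots> \<le> exp \<bar>z\<bar> * \<bar>z\<bar>"
  proof -
    have "exp (max z 0) \<le> exp \<bar>z\<bar>" by simp
    thus ?thesis by (simp add: mult_right_mono)
  qed
  finally have c: "\<bar>exp z - 1\<bar> \<le> exp \<bar>z\<bar> * \<bar>z\<bar>" by simp
  have "z * (exp z - 1) \<le> \<bar>z\<bar> * \<bar>exp z - 1\<bar>" by (metis abs_ge_self abs_mult)
  also have "\<dots> \<le> \<bar>z\<bar> * (exp \<bar>z\<bar> * \<bar>z\<bar>)" using c by (intro mult_left_mono) auto
  also have "\<dots> = z\<^sup>2 * exp \<bar>z\<bar>" by (simp add: power2_eq_square)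
  finally show ?thesis using a b by simp
qed

lemma quad_deriv:
  fixes F :: "real \<Rightarrow> real"
  assumes "\<And>d. \<bar>d\<bar> \<le> 1 \<Longrightarrow> \<bar>F (t + d) - F t - d * D\<bar> \<le> C * d\<^sup>2"
  shows "(F has_real_derivative D) (at t)"
  unfolding DERIV_def LIM_eq
proof (intro allI impI)
  fix r :: real assume r: "0 < r"
  have C0: "\<bar>F (t + 1) - F t - 1 * D\<bar> \<le> C * 1\<^sup>2" by (rule assms) simp
  have C: "0 \<le> C" using C0 abs_ge_zero[of "F (t + 1) - F t - 1 * D"] unfolding power_one mult_1_right by linarith
  define s where "s = min 1 (r / (C + 1))"
  have s: "0 < s" using r C by (simp add: s_def)
  show "\<exists>s>0. \<forall>x. x \<noteq> 0 \<and> norm (x - 0) < s \<longrightarrow> norm ((F (t + x) - F t) / x - D) < r"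
  proof (intro exI[of _ s] conjI allI impI s)
    fix x :: real assume x: "x \<noteq> 0 \<and> norm (x - 0) < s"
    hence x1: "\<bar>x\<bar> \<le> 1" "\<bar>x\<bar> < r / (C + 1)" by (auto simp: s_def)
    have "(F (t + x) - F t) / x - D = (F (t + x) - F t - x * D) / x" using x by (simp add: field_simps)
    hence "norm ((F (t + x) - F t) / x - D) = \<bar>F (t + x) - F t - x * D\<bar> / \<bar>x\<bar>" by simp
    also have "\<dots> \<le> C * x\<^sup>2 / \<bar>x\<bar>" by (rule divide_right_mono[OF assms[OF x1(1)]]) simp
    also have "\<dots> = C * \<bar>x\<bar>"
    proof -
      have "x\<^sup>2 = \<bar>x\<bar> * \<bar>x\<bar>" by (simp add: power2_eq_square)
      have "\<bar>x\<bar> \<noteq> 0" using x by simp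
      thus ?thesis unfolding \<open>x\<^sup>2 = \<bar>x\<bar> * \<bar>x\<bar>\<close> by (simp add: field_simps)
    qed
    also have "\<dots> \<le> C * (r / (C + 1))" using x1 C by (intro mult_left_mono) auto
    also have "\<dots> < r" using C r by (simp add: field_simps)
    finally show "norm ((F (t + x) - F t) / x - D) < r" .
  qed
qed



lemma meas_cont:
  assumes "sets M = sets borel" "continuous_on UNIV (f :: real \<Rightarrow> real)"
  shows "f \<in> borel_measurable M"
  by (subst measurable_cong_sets[OF assms(1) refl]) (rule borel_measurable_continuous_onI[OF assms(2)])

lemma int_bound:
  fixes f :: "real \<Rightarrow> real"
  assumes "prob_space M" "sets M = sets borel" "continuous_on UNIV f" "AE x in M. \<bar>f x\<bar> \<le> C"
  shows "integrable M f" "\<bar>\<integral>x. f x \<partial>M\<bar> \<le> C"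
proof -
  interpret prob_space M by fact
  have m: "f \<in> borel_measurable M" by (rule meas_cont[OF assms(2,3)])
  show i: "integrable M f" by (rule integrable_const_bound[of _ C]) (use assms(4) m in auto)
  have "(\<integral>x. f x \<partial>M) \<le> C" by (rule integral_le_const[OF i]) (use assms(4) in auto)
  moreover have "-C \<le> (\<integral>x. f x \<partial>M)" by (rule integral_ge_const[OF i]) (use assms(4) in auto)
  ultimately show "\<bar>\<integral>x. f x \<partial>M\<bar> \<le> C" by linarith
qed

lemma hexp_bound:
  fixes h k s H K :: real
  assumes "\<bar>h\<bar> \<le> H" "\<bar>k\<bar> \<le> K"
  shows "\<bar>h * exp (s * k)\<bar> \<le> H * exp (\<bar>s\<bar> * K)"
proof -
  have "s * k \<le> \<bar>s\<bar> * \<bar>k\<bar>" by (metis abs_ge_self abs_mult)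
  also have "\<dots> \<le> \<bar>s\<bar> * K" using assms by (intro mult_left_mono) auto
  finally have "exp (s * k) \<le> exp (\<bar>s\<bar> * K)" by simp
  thus ?thesis using assms by (simp add: abs_mult mult_mono)
qed

lemma deriv_int:
  fixes h k :: "real \<Rightarrow> real"
  assumes P: "prob_space M" and S: "sets M = sets borel"
    and h: "continuous_on UNIV h" and k: "continuous_on UNIV k"
    and H: "AE a in M. \<bar>h a\<bar> \<le> H" and K: "AE a in M. \<bar>k a\<bar> \<le> K"
    and H0: "0 \<le> H" and K0: "0 \<le> K"
  shows "((\<lambda>t. \<integral>a. h a * exp (t * k a) \<partial>M) has_real_derivative (\<integral>a. h a * k a * exp (t * k a) \<partial>M)) (at t)"
proof (rule quad_deriv[where C = "H * K\<^sup>2 * exp (\<bar>t\<bar> * K + K)"])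
  fix d :: real assume d: "\<bar>d\<bar> \<le> 1"
  have c1: "continuous_on UNIV (\<lambda>a. h a * exp ((t + d) * k a))"
    by (intro continuous_intros h k)
  have c0: "continuous_on UNIV (\<lambda>a. h a * exp (t * k a))"
    by (intro continuous_intros h k)
  have c2: "continuous_on UNIV (\<lambda>a. h a * k a * exp (t * k a))"
    by (intro continuous_intros h k)
  have c3: "continuous_on UNIV (\<lambda>a. h a * exp ((t + d) * k a) - h a * exp (t * k a) - d * (h a * k a * exp (t * k a)))"
    by (intro continuous_intros h k)
  have bnd: "\<bar>h a * exp ((t + d) * k a) - h a * exp (t * k a) - d * (h a * k a * exp (t * k a))\<bar>
      \<le> H * K\<^sup>2 * exp (\<bar>t\<bar> * K + K) * d\<^sup>2"
    if ha: "\<bar>h a\<bar> \<le> H" and ka: "\<bar>k a\<bar> \<le> K" for a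
  proof -
    have eq: "h a * exp ((t + d) * k a) - h a * exp (t * k a) - d * (h a * k a * exp (t * k a))
        = h a * exp (t * k a) * (exp (d * k a) - 1 - d * k a)"
      by (simp add: algebra_simps exp_add)
    have e1: "exp (t * k a) \<le> exp (\<bar>t\<bar> * K)"
    proof -
      have "t * k a \<le> \<bar>t\<bar> * \<bar>k a\<bar>" by (metis abs_ge_self abs_mult)
      also have "\<dots> \<le> \<bar>t\<bar> * K" using ka by (intro mult_left_mono) auto
      finally show ?thesis by simp
    qed
    have dk: "\<bar>d * k a\<bar> \<le> K"
    proof -
      have "\<bar>d * k a\<bar> = \<bar>d\<bar> * \<bar>k a\<bar>" by (simp add: abs_mult)
      also have "\<dots> \<le> 1 * K" using d ka by (intro mult_mono) auto
      finally show ?thesis by simp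
    qed
    have dk2: "(d * k a)\<^sup>2 \<le> d\<^sup>2 * K\<^sup>2"
    proof -
      have "(d * k a)\<^sup>2 = d\<^sup>2 * (k a)\<^sup>2" by (simp add: power_mult_distrib)
      also have "\<dots> \<le> d\<^sup>2 * K\<^sup>2" using ka
        by (intro mult_left_mono) (auto simp: abs_le_square_iff[symmetric] abs_le_iff)
      finally show ?thesis .
    qed
    have t2: "\<bar>exp (d * k a) - 1 - d * k a\<bar> \<le> d\<^sup>2 * K\<^sup>2 * exp K"
    proof -
      have "\<bar>exp (d * k a) - 1 - d * k a\<bar> \<le> (d * k a)\<^sup>2 * exp \<bar>d * k a\<bar>" by (rule exp_taylor)
      also have "\<dots> \<le> d\<^sup>2 * K\<^sup>2 * exp K" using dk dk2 by (intro mult_mono) auto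
      finally show ?thesis .
    qed
    have "\<bar>h a * exp (t * k a) * (exp (d * k a) - 1 - d * k a)\<bar>
        = \<bar>h a\<bar> * exp (t * k a) * \<bar>exp (d * k a) - 1 - d * k a\<bar>" by (simp add: abs_mult)
    also have "\<dots> \<le> H * exp (\<bar>t\<bar> * K) * (d\<^sup>2 * K\<^sup>2 * exp K)"
      using ha e1 t2 by (intro mult_mono) auto
    also have "\<dots> = H * K\<^sup>2 * exp (\<bar>t\<bar> * K + K) * d\<^sup>2" by (simp add: exp_add algebra_simps)
    finally show ?thesis using eq by simp
  qed
  have AEb: "AE a in M. \<bar>h a * exp ((t + d) * k a) - h a * exp (t * k a) - d * (h a * k a * exp (t * k a))\<bar>
      \<le> H * K\<^sup>2 * exp (\<bar>t\<bar> * K + K) * d\<^sup>2"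
    using H K by eventually_elim (rule bnd)
  have "AE a in M. \<bar>h a * exp ((t + d) * k a)\<bar> \<le> H * exp (\<bar>t + d\<bar> * K)"
    using H K by eventually_elim (rule hexp_bound)
  hence i1: "integrable M (\<lambda>a. h a * exp ((t + d) * k a))" by (rule int_bound(1)[OF P S c1])
  have "AE a in M. \<bar>h a * exp (t * k a)\<bar> \<le> H * exp (\<bar>t\<bar> * K)"
    using H K by eventually_elim (rule hexp_bound)
  hence i0: "integrable M (\<lambda>a. h a * exp (t * k a))" by (rule int_bound(1)[OF P S c0])
  have hk: "AE a in M. \<bar>h a * k a\<bar> \<le> H * K"
    using H K by eventually_elim (simp add: abs_mult mult_mono)
  have "AE a in M. \<bar>h a * k a * exp (t * k a)\<bar> \<le> H * K * exp (\<bar>t\<bar> * K)"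
    using hk K by eventually_elim (rule hexp_bound)
  hence i2: "integrable M (\<lambda>a. h a * k a * exp (t * k a))" by (rule int_bound(1)[OF P S c2])
  have "(\<integral>a. h a * exp ((t + d) * k a) \<partial>M) - (\<integral>a. h a * exp (t * k a) \<partial>M) - d * (\<integral>a. h a * k a * exp (t * k a) \<partial>M)
      = (\<integral>a. h a * exp ((t + d) * k a) - h a * exp (t * k a) - d * (h a * k a * exp (t * k a)) \<partial>M)"
    using i0 i1 i2 by simp
  also have "\<bar>\<dots>\<bar> \<le> H * K\<^sup>2 * exp (\<bar>t\<bar> * K + K) * d\<^sup>2"
    by (rule int_bound(2)[OF P S c3 AEb])
  finally show "\<bar>(\<integral>a. h a * exp ((t + d) * k a) \<partial>M) - (\<integral>a. h a * exp (t * k a) \<partial>M) - d * (\<integral>a. h a * k a * exp (t * k a) \<partial>M)\<bar>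
      \<le> H * K\<^sup>2 * exp (\<bar>t\<bar> * K + K) * d\<^sup>2" .
qed



definition GG :: "real measure \<Rightarrow> real \<Rightarrow> real \<Rightarrow> real" where
  "GG M c x = (\<integral>a. exp (x * a + c * a\<^sup>2) \<partial>M)"

definition GG1 :: "real measure \<Rightarrow> real \<Rightarrow> real \<Rightarrow> real" where
  "GG1 M c x = (\<integral>a. a * exp (x * a + c * a\<^sup>2) \<partial>M)"

definition GG2 :: "real measure \<Rightarrow> real \<Rightarrow> real \<Rightarrow> real" where
  "GG2 M c x = (\<integral>a. a\<^sup>2 * exp (x * a + c * a\<^sup>2) \<partial>M)"

context
  fixes M :: "real measure" and R :: real
  assumes P: "prob_space M" and S: "sets M = sets borel"
    and Rb: "AE a in M. \<bar>a\<bar> \<le> R" and R0: "0 \<le> R"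
begin

lemma a2b: "AE a in M. \<bar>a\<^sup>2\<bar> \<le> R\<^sup>2"
  using Rb by eventually_elim (simp add: abs_le_square_iff[symmetric])

lemma expxa_b: "AE a in M. \<bar>exp (x * a)\<bar> \<le> exp (\<bar>x\<bar> * R)"
  using Rb
proof eventually_elim
  fix a assume "\<bar>a\<bar> \<le> R"
  hence "\<bar>1 * exp (x * a)\<bar> \<le> 1 * exp (\<bar>x\<bar> * R)" by (intro hexp_bound) auto
  thus "\<bar>exp (x * a)\<bar> \<le> exp (\<bar>x\<bar> * R)" by simp
qed

lemma expca_b: "AE a in M. \<bar>exp (c * a\<^sup>2)\<bar> \<le> exp (\<bar>c\<bar> * R\<^sup>2)"
  using a2b
proof eventually_elim
  fix a assume "\<bar>a\<^sup>2\<bar> \<le> R\<^sup>2"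
  hence "\<bar>1 * exp (c * a\<^sup>2)\<bar> \<le> 1 * exp (\<bar>c\<bar> * R\<^sup>2)" by (intro hexp_bound) auto
  thus "\<bar>exp (c * a\<^sup>2)\<bar> \<le> exp (\<bar>c\<bar> * R\<^sup>2)" by simp
qed

lemma GG_dc: "((\<lambda>t. GG M t x) has_real_derivative GG2 M c x) (at c)"
proof -
  have "((\<lambda>t. \<integral>a. exp (x * a) * exp (t * a\<^sup>2) \<partial>M) has_real_derivative
      (\<integral>a. exp (x * a) * a\<^sup>2 * exp (c * a\<^sup>2) \<partial>M)) (at c)"
    by (rule deriv_int[OF P S _ _ expxa_b a2b]) (auto intro!: continuous_intros)
  moreover have "(\<lambda>t. GG M t x) = (\<lambda>t. \<integral>a. exp (x * a) * exp (t * a\<^sup>2) \<partial>M)"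
    by (simp add: GG_def exp_add)
  moreover have "GG2 M c x = (\<integral>a. exp (x * a) * a\<^sup>2 * exp (c * a\<^sup>2) \<partial>M)"
    by (simp add: GG2_def exp_add mult_ac)
  ultimately show ?thesis by simp
qed

lemma GG_dx: "((\<lambda>y. GG M c y) has_real_derivative GG1 M c x) (at x)"
proof -
  have "((\<lambda>t. \<integral>a. exp (c * a\<^sup>2) * exp (t * a) \<partial>M) has_real_derivative
      (\<integral>a. exp (c * a\<^sup>2) * a * exp (x * a) \<partial>M)) (at x)"
    by (rule deriv_int[OF P S _ _ expca_b Rb]) (auto intro!: continuous_intros simp: R0)
  moreover have "(\<lambda>t. GG M c t) = (\<lambda>t. \<integral>a. exp (c * a\<^sup>2) * exp (t * a) \<partial>M)"
    by (simp add: GG_def exp_add mult_ac)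
  moreover have "GG1 M c x = (\<integral>a. exp (c * a\<^sup>2) * a * exp (x * a) \<partial>M)"
    by (simp add: GG1_def exp_add mult_ac)
  ultimately show ?thesis by simp
qed

lemma GG1_dx: "((\<lambda>y. GG1 M c y) has_real_derivative GG2 M c x) (at x)"
proof -
  have hb: "AE a in M. \<bar>a * exp (c * a\<^sup>2)\<bar> \<le> R * exp (\<bar>c\<bar> * R\<^sup>2)"
    using Rb a2b by eventually_elim (rule hexp_bound)
  have "((\<lambda>t. \<integral>a. (a * exp (c * a\<^sup>2)) * exp (t * a) \<partial>M) has_real_derivative
      (\<integral>a. (a * exp (c * a\<^sup>2)) * a * exp (x * a) \<partial>M)) (at x)"
    by (rule deriv_int[OF P S _ _ hb Rb]) (auto intro!: continuous_intros simp: R0)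
  moreover have "(\<lambda>t. GG1 M c t) = (\<lambda>t. \<integral>a. (a * exp (c * a\<^sup>2)) * exp (t * a) \<partial>M)"
    by (simp add: GG1_def exp_add mult_ac)
  moreover have "GG2 M c x = (\<integral>a. (a * exp (c * a\<^sup>2)) * a * exp (x * a) \<partial>M)"
    by (simp add: GG2_def exp_add mult_ac power2_eq_square)
  ultimately show ?thesis by simp
qed

lemma GG_pos: "0 < GG M c x"
proof -
  interpret prob_space M by (rule P)
  have b: "AE a in M. \<bar>exp (x * a + c * a\<^sup>2)\<bar> \<le> exp (\<bar>x\<bar> * R + \<bar>c\<bar> * R\<^sup>2)"
    using expxa_b[of x] expca_b[of c] by eventually_elim (simp add: exp_add mult_mono)
  have i: "integrable M (\<lambda>a. exp (x * a + c * a\<^sup>2))"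
    by (rule int_bound(1)[OF P S _ b]) (auto intro!: continuous_intros)
  have lb: "AE a in M. exp (- (\<bar>x\<bar> * R + \<bar>c\<bar> * R\<^sup>2)) \<le> exp (x * a + c * a\<^sup>2)"
    using Rb a2b
  proof eventually_elim
    fix a assume a: "\<bar>a\<bar> \<le> R" "\<bar>a\<^sup>2\<bar> \<le> R\<^sup>2"
    have "\<bar>x * a\<bar> \<le> \<bar>x\<bar> * R" using a by (simp add: abs_mult mult_left_mono)
    moreover have "\<bar>c * a\<^sup>2\<bar> \<le> \<bar>c\<bar> * R\<^sup>2" using a by (simp add: abs_mult mult_left_mono)
    ultimately show "exp (- (\<bar>x\<bar> * R + \<bar>c\<bar> * R\<^sup>2)) \<le> exp (x * a + c * a\<^sup>2)"
      by simp
  qed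
  have "exp (- (\<bar>x\<bar> * R + \<bar>c\<bar> * R\<^sup>2)) \<le> GG M c x"
    unfolding GG_def by (rule integral_ge_const[OF i lb])
  thus ?thesis by (meson exp_gt_zero less_le_trans)
qed

lemma GG_lip:
  assumes "\<bar>c\<bar> \<le> Cb" "\<bar>c'\<bar> \<le> Cb" "\<bar>x\<bar> \<le> Xb" "\<bar>x'\<bar> \<le> Xb"
  shows "\<bar>GG M c x - GG M c' x'\<bar> \<le> exp (Xb * R + Cb * R\<^sup>2) * (\<bar>x - x'\<bar> * R + \<bar>c - c'\<bar> * R\<^sup>2)"
proof -
  have pw: "\<bar>exp (x * a + c * a\<^sup>2) - exp (x' * a + c' * a\<^sup>2)\<bar>
      \<le> exp (Xb * R + Cb * R\<^sup>2) * (\<bar>x - x'\<bar> * R + \<bar>c - c'\<bar> * R\<^sup>2)" if a: "\<bar>a\<bar> \<le> R" for a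
  proof -
    have a2: "a\<^sup>2 \<le> R\<^sup>2" using a by (simp add: abs_le_square_iff[symmetric])
    have y1: "x * a + c * a\<^sup>2 \<le> Xb * R + Cb * R\<^sup>2"
    proof -
      have "x * a \<le> \<bar>x\<bar> * \<bar>a\<bar>" by (metis abs_ge_self abs_mult)
      also have "\<dots> \<le> Xb * R" using assms a by (intro mult_mono) auto
      moreover have "c * a\<^sup>2 \<le> \<bar>c\<bar> * a\<^sup>2" by (simp add: mult_right_mono)
      moreover have "\<bar>c\<bar> * a\<^sup>2 \<le> Cb * R\<^sup>2" using assms a2 by (intro mult_mono) auto
      ultimately show ?thesis by linarith
    qed
    have y2: "x' * a + c' * a\<^sup>2 \<le> Xb * R + Cb * R\<^sup>2"
    proof -
      have "x' * a \<le> \<bar>x'\<bar> * \<bar>a\<bar>" by (metis abs_ge_self abs_mult)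
      also have "\<dots> \<le> Xb * R" using assms a by (intro mult_mono) auto
      moreover have "c' * a\<^sup>2 \<le> \<bar>c'\<bar> * a\<^sup>2" by (simp add: mult_right_mono)
      moreover have "\<bar>c'\<bar> * a\<^sup>2 \<le> Cb * R\<^sup>2" using assms a2 by (intro mult_mono) auto
      ultimately show ?thesis by linarith
    qed
    have d: "\<bar>(x * a + c * a\<^sup>2) - (x' * a + c' * a\<^sup>2)\<bar> \<le> \<bar>x - x'\<bar> * R + \<bar>c - c'\<bar> * R\<^sup>2"
    proof -
      have "(x * a + c * a\<^sup>2) - (x' * a + c' * a\<^sup>2) = (x - x') * a + (c - c') * a\<^sup>2" by (simp add: algebra_simps)
      hence "\<bar>(x * a + c * a\<^sup>2) - (x' * a + c' * a\<^sup>2)\<bar> \<le> \<bar>x - x'\<bar> * \<bar>a\<bar> + \<bar>c - c'\<bar> * a\<^sup>2"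
        by (simp add: abs_mult) (metis abs_mult abs_power2 abs_triangle_ineq)
      also have "\<dots> \<le> \<bar>x - x'\<bar> * R + \<bar>c - c'\<bar> * R\<^sup>2" using a a2
        by (intro add_mono mult_left_mono) auto
      finally show ?thesis .
    qed
    have "\<bar>exp (x * a + c * a\<^sup>2) - exp (x' * a + c' * a\<^sup>2)\<bar>
      \<le> exp (max (x * a + c * a\<^sup>2) (x' * a + c' * a\<^sup>2)) * \<bar>(x * a + c * a\<^sup>2) - (x' * a + c' * a\<^sup>2)\<bar>"
      by (rule exp_lip)
    also have "\<dots> \<le> exp (Xb * R + Cb * R\<^sup>2) * (\<bar>x - x'\<bar> * R + \<bar>c - c'\<bar> * R\<^sup>2)"
      using y1 y2 d by (intro mult_mono) auto
    finally show ?thesis .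
  qed
  have b: "AE a in M. \<bar>exp (x * a + c * a\<^sup>2) - exp (x' * a + c' * a\<^sup>2)\<bar>
      \<le> exp (Xb * R + Cb * R\<^sup>2) * (\<bar>x - x'\<bar> * R + \<bar>c - c'\<bar> * R\<^sup>2)"
    using Rb by eventually_elim (rule pw)
  have b1: "AE a in M. \<bar>exp (x * a + c * a\<^sup>2)\<bar> \<le> exp (\<bar>x\<bar> * R + \<bar>c\<bar> * R\<^sup>2)"
    using expxa_b[of x] expca_b[of c] by eventually_elim (simp add: exp_add mult_mono)
  have b2: "AE a in M. \<bar>exp (x' * a + c' * a\<^sup>2)\<bar> \<le> exp (\<bar>x'\<bar> * R + \<bar>c'\<bar> * R\<^sup>2)"
    using expxa_b[of x'] expca_b[of c'] by eventually_elim (simp add: exp_add mult_mono)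
  have i1: "integrable M (\<lambda>a. exp (x * a + c * a\<^sup>2))"
    by (rule int_bound(1)[OF P S _ b1]) (auto intro!: continuous_intros)
  have i2: "integrable M (\<lambda>a. exp (x' * a + c' * a\<^sup>2))"
    by (rule int_bound(1)[OF P S _ b2]) (auto intro!: continuous_intros)
  have "GG M c x - GG M c' x' = (\<integral>a. exp (x * a + c * a\<^sup>2) - exp (x' * a + c' * a\<^sup>2) \<partial>M)"
    unfolding GG_def using i1 i2 by simp
  also have "\<bar>\<dots>\<bar> \<le> exp (Xb * R + Cb * R\<^sup>2) * (\<bar>x - x'\<bar> * R + \<bar>c - c'\<bar> * R\<^sup>2)"
    by (rule int_bound(2)[OF P S _ b]) (auto intro!: continuous_intros)
  finally show ?thesis .
qed

lemma GG_cont: "continuous_on UNIV (\<lambda>z. GG M (fst z) (snd z))"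
  unfolding continuous_on_iff
proof (intro ballI allI impI)
  fix z :: "real \<times> real" and e :: real assume e: "0 < e"
  obtain c x where z: "z = (c, x)" by (cases z)
  define L where "L = exp ((\<bar>x\<bar> + 1) * R + (\<bar>c\<bar> + 1) * R\<^sup>2) * (R + R\<^sup>2)"
  have L0: "0 \<le> L" unfolding L_def using R0 by simp
  define d where "d = min 1 (e / (L + 1))"
  have d0: "0 < d" using e L0 by (simp add: d_def)
  show "\<exists>d>0. \<forall>z'\<in>UNIV. dist z' z < d \<longrightarrow> dist (GG M (fst z') (snd z')) (GG M (fst z) (snd z)) < e"
  proof (intro exI[of _ d] conjI d0 ballI impI)
    fix z' :: "real \<times> real" assume dz: "dist z' z < d"
    obtain c' x' where z': "z' = (c', x')" by (cases z')
    have dc: "\<bar>c' - c\<bar> < d" using dz dist_fst_le[of z' z] by (simp add: z z' dist_real_def)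
    have dx: "\<bar>x' - x\<bar> < d" using dz dist_snd_le[of z' z] by (simp add: z z' dist_real_def)
    have d1: "d \<le> 1" "d \<le> e / (L + 1)" by (auto simp: d_def)
    have "\<bar>GG M c' x' - GG M c x\<bar> \<le> exp ((\<bar>x\<bar> + 1) * R + (\<bar>c\<bar> + 1) * R\<^sup>2) * (\<bar>x' - x\<bar> * R + \<bar>c' - c\<bar> * R\<^sup>2)"
      using dc dx d1 by (intro GG_lip) auto
    also have "\<dots> \<le> exp ((\<bar>x\<bar> + 1) * R + (\<bar>c\<bar> + 1) * R\<^sup>2) * (d * R + d * R\<^sup>2)"
      using dc dx R0 by (intro mult_left_mono add_mono mult_right_mono) auto
    also have "\<dots> = L * d" by (simp add: L_def algebra_simps)
    also have "\<dots> \<le> L * (e / (L + 1))" using d1 L0 by (intro mult_left_mono) auto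
    also have "\<dots> < e" using L0 e by (simp add: field_simps)
    finally show "dist (GG M (fst z') (snd z')) (GG M (fst z) (snd z)) < e"
      by (simp add: z z' dist_real_def)
  qed
qed

lemma GG_bound: "\<bar>GG M c x\<bar> \<le> exp (\<bar>x\<bar> * R + \<bar>c\<bar> * R\<^sup>2)"
proof -
  have b: "AE a in M. \<bar>exp (x * a + c * a\<^sup>2)\<bar> \<le> exp (\<bar>x\<bar> * R + \<bar>c\<bar> * R\<^sup>2)"
    using expxa_b[of x] expca_b[of c] by eventually_elim (simp add: exp_add mult_mono)
  show ?thesis unfolding GG_def
    by (rule int_bound(2)[OF P S _ b]) (auto intro!: continuous_intros)
qed

end


lemma second_deriv_max:
  fixes f f' :: "real \<Rightarrow> real"
  assumes ax: "a < x" and xb: "x < b" and mx: "\<forall>y\<in>{a<..<b}. f y \<le> f x"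
    and d1: "\<forall>y\<in>{a<..<b}. (f has_real_derivative f' y) (at y)"
    and d2: "(f' has_real_derivative f2) (at x)"
  shows "f2 \<le> 0"
proof (rule ccontr)
  assume "\<not> f2 \<le> 0" hence f2: "0 < f2" by simp
  have f'0: "f' x = 0"
  proof -
    have 1: "(f has_real_derivative f' x) (at x)" using d1 ax xb by auto
    have 2: "0 < min (x - a) (b - x)" using ax xb by simp
    have 3: "\<forall>y. \<bar>x - y\<bar> < min (x - a) (b - x) \<longrightarrow> f y \<le> f x" using mx by (auto simp: abs_if split: if_splits)
    show ?thesis using DERIV_local_max[OF 1 2 3] .
  qed
  obtain d where d: "0 < d" "\<forall>h>0. h < d \<longrightarrow> f' x < f' (x + h)"
    using DERIV_pos_inc_right[OF d2 f2] by blast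
  obtain m where hm: "m \<le> b - x" "m \<le> d" "0 < m" using d xb by (metis min.cobounded1 min.cobounded2 min_less_iff_conj diff_gt_0_iff_gt)
  define h where "h = m / 2"
  have h1: "0 < h" using hm unfolding h_def by simp
  have h2: "h < d" using hm unfolding h_def by simp
  have h3: "x + h < b" using hm unfolding h_def by simp
  note h = h1 h2 h3
  obtain z where z: "x < z" "z < x + h" "f (x + h) - f x = (x + h - x) * f' z"
    using MVT2[of x "x + h" f f'] h d1 ax by force
  have "f' x < f' (x + (z - x))" using d(2) z h by (intro d(2)[rule_format]) auto
  hence "0 < f' z" using f'0 by simp
  hence "0 < h * f' z" using h by simp
  hence "f x < f (x + h)" using z(3) by simp
  moreover have "f (x + h) \<le> f x" using mx h ax by auto
  ultimately show False by simp
qed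



lemma max_principle:
  fixes w ws wx wxx :: "real \<Rightarrow> real \<Rightarrow> real" and Dd :: "real \<Rightarrow> real"
  assumes v: "0 < v"
    and cont: "continuous_on ({0..v} \<times> UNIV) (\<lambda>z. w (fst z) (snd z))"
    and termc: "\<forall>x. w v x \<le> 0"
    and ders: "\<forall>s\<in>{0<..<v}. \<forall>x. ((\<lambda>t. w t x) has_real_derivative ws s x) (at s) \<and>
                 (w s has_real_derivative wx s x) (at x) \<and>
                 (wx s has_real_derivative wxx s x) (at x) \<and> ws s x = - Dd s * wxx s x"
    and Dd: "\<forall>s\<in>{0<..<v}. 0 \<le> Dd s \<and> Dd s \<le> Dm"
    and growth: "\<forall>s\<in>{0<..<v}. \<forall>x. w s x \<le> C * exp (K * \<bar>x\<bar>)"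
    and K0: "0 \<le> K"
    and s0: "s0 \<in> {0<..<v}"
  shows "w s0 x0 \<le> 0"
proof -
  have Dm0: "0 \<le> Dm" using Dd[rule_format, of "v/2"] v by auto
  define k where "k = K + 1"
  define A where "A = Dm * k\<^sup>2 + 1"
  define \<psi> where "\<psi> = (\<lambda>s x. exp (A * (v - s)) * (exp (k * x) + exp (- (k * x))))"
  have \<psi>pos: "0 < \<psi> s x" for s x unfolding \<psi>_def by (simp add: add_pos_pos)
  have \<psi>lb: "exp (k * \<bar>x\<bar>) \<le> \<psi> s x" if "s \<le> v" for s x
  proof -
    have "exp (k * \<bar>x\<bar>) \<le> exp (k * x) + exp (- (k * x))"
      by (cases "0 \<le> x") (auto simp: add_increasing add_increasing2)
    also have "\<dots> \<le> exp (A * (v - s)) * (exp (k * x) + exp (- (k * x)))"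
    proof -
      have "0 \<le> A" unfolding A_def using Dm0 by simp
      hence "1 \<le> exp (A * (v - s))" using that by simp
      thus ?thesis by (simp add: add_pos_pos)
    qed
    finally show ?thesis unfolding \<psi>_def .
  qed
  have main: "w s0 x0 \<le> \<epsilon> * \<psi> s0 x0" if \<epsilon>: "0 < \<epsilon>" for \<epsilon>
  proof -
    define R where "R = \<bar>x0\<bar> + 1 + \<bar>C\<bar> / \<epsilon>"
    have "0 \<le> \<bar>C\<bar> / \<epsilon>" using \<epsilon> by simp
    hence R0: "\<bar>x0\<bar> < R" unfolding R_def by linarith
    have CR: "C < \<epsilon> * exp R"
    proof -
      have "\<bar>C\<bar> / \<epsilon> < R" unfolding R_def by simp
      also have "R < exp R" by (rule less_le_trans[OF _ exp_ge_add_one_self]) simp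
      finally have "\<bar>C\<bar> < \<epsilon> * exp R" using \<epsilon> by (simp add: field_simps)
      thus ?thesis by simp
    qed
    define W where "W = (\<lambda>s x. w s x - \<epsilon> * \<psi> s x)"
    define T where "T = {s0..v} \<times> {-R..R}"
    have cT: "compact T" unfolding T_def by (intro compact_Times compact_Icc)
    have neT: "T \<noteq> {}" unfolding T_def using s0 R0 by auto
    have TT: "T \<subseteq> {0..v} \<times> UNIV" unfolding T_def using s0 by auto
    have contW: "continuous_on T (\<lambda>z. W (fst z) (snd z))"
      unfolding W_def \<psi>_def
      by (intro continuous_intros continuous_on_subset[OF cont TT])
    obtain z1 where z1: "z1 \<in> T" "\<forall>y\<in>T. W (fst y) (snd y) \<le> W (fst z1) (snd z1)"
      using continuous_attains_sup[OF cT neT contW] by blast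
    obtain s1 x1 where sx1: "z1 = (s1, x1)" by (cases z1)
    have s1: "s0 \<le> s1" "s1 \<le> v" and x1: "-R \<le> x1" "x1 \<le> R" using z1(1) by (auto simp: T_def sx1)
    have mx: "W s x \<le> W s1 x1" if "s0 \<le> s" "s \<le> v" "-R \<le> x" "x \<le> R" for s x
      using z1(2)[rule_format, of "(s, x)"] that by (auto simp: T_def sx1)
    have "W s1 x1 \<le> 0"
    proof (rule ccontr)
      assume pos: "\<not> W s1 x1 \<le> 0"
      have s1v: "s1 \<noteq> v"
      proof
        assume "s1 = v"
        hence "W s1 x1 = w v x1 - \<epsilon> * \<psi> v x1" by (simp add: W_def)
        moreover have "0 < \<epsilon> * \<psi> v x1" using \<epsilon> \<psi>pos by simp
        moreover have "w v x1 \<le> 0" using termc by simp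
        ultimately show False using pos by linarith
      qed
      have s1i: "s1 \<in> {0<..<v}" using s1 s1v s0 by auto
      have x1R: "\<bar>x1\<bar> \<noteq> R"
      proof
        assume xR: "\<bar>x1\<bar> = R"
        have "w s1 x1 \<le> C * exp (K * R)" using growth s1i xR by auto
        also have "\<dots> < \<epsilon> * exp R * exp (K * R)" using CR by simp
        also have "\<dots> = \<epsilon> * exp (k * \<bar>x1\<bar>)" by (simp add: k_def xR mult_exp_exp algebra_simps)
        also have "\<dots> \<le> \<epsilon> * \<psi> s1 x1" using \<psi>lb[OF s1(2)] \<epsilon> by simp
        finally show False using pos by (simp add: W_def)
      qed
      have x1i: "-R < x1" "x1 < R" using x1 x1R by auto
      note d = ders[rule_format, OF s1i]
      define E where "E = exp (A * (v - s1))"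
      have E0: "0 < E" by (simp add: E_def)
      have dpx: "((\<lambda>y. \<psi> s1 y) has_real_derivative E * (k * exp (k * y) - k * exp (- (k * y)))) (at y)" for y
        unfolding \<psi>_def E_def by (rule derivative_eq_intros refl | simp add: algebra_simps)+
      have dpxx: "((\<lambda>y. E * (k * exp (k * y) - k * exp (- (k * y)))) has_real_derivative E * (k\<^sup>2 * exp (k * y) + k\<^sup>2 * exp (- (k * y)))) (at y)" for y
        by (rule derivative_eq_intros refl | simp add: algebra_simps power2_eq_square)+
      have dWx: "(W s1 has_real_derivative (wx s1 y - \<epsilon> * (E * (k * exp (k * y) - k * exp (- (k * y)))))) (at y)" for y
        unfolding W_def
        by (intro DERIV_diff DERIV_cmult dpx ders[rule_format, OF s1i, THEN conjunct2, THEN conjunct1])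
      have dWxx: "((\<lambda>y. wx s1 y - \<epsilon> * (E * (k * exp (k * y) - k * exp (- (k * y))))) has_real_derivative
          (wxx s1 x1 - \<epsilon> * (E * (k\<^sup>2 * exp (k * x1) + k\<^sup>2 * exp (- (k * x1)))))) (at x1)"
        by (intro DERIV_diff DERIV_cmult dpxx ders[rule_format, OF s1i, THEN conjunct2, THEN conjunct2, THEN conjunct1])
      have Wxx: "wxx s1 x1 - \<epsilon> * (E * (k\<^sup>2 * exp (k * x1) + k\<^sup>2 * exp (- (k * x1)))) \<le> 0"
        by (rule second_deriv_max[where f = "W s1" and f' = "\<lambda>y. wx s1 y - \<epsilon> * (E * (k * exp (k * y) - k * exp (- (k * y))))", OF x1i _ _ dWxx])
           (use mx s1 dWx in auto)
      hence wxx: "wxx s1 x1 \<le> \<epsilon> * k\<^sup>2 * \<psi> s1 x1" by (simp add: \<psi>_def E_def algebra_simps)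
      have dps: "((\<lambda>t. \<psi> t x1) has_real_derivative - A * \<psi> s1 x1) (at s1)"
        unfolding \<psi>_def by (rule derivative_eq_intros refl | simp add: algebra_simps)+
      have dWs: "((\<lambda>t. W t x1) has_real_derivative (ws s1 x1 + \<epsilon> * A * \<psi> s1 x1)) (at s1)"
      proof -
        have "((\<lambda>t. W t x1) has_real_derivative (ws s1 x1 - \<epsilon> * (- A * \<psi> s1 x1))) (at s1)"
          unfolding W_def
          by (intro DERIV_diff DERIV_cmult dps ders[rule_format, OF s1i, THEN conjunct1])
        thus ?thesis by (simp add: algebra_simps)
      qed
      have Dd1: "0 \<le> Dd s1" "Dd s1 \<le> Dm" using Dd s1i by auto
      have "- Dd s1 * wxx s1 x1 \<ge> - Dd s1 * (\<epsilon> * k\<^sup>2 * \<psi> s1 x1)"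
        using wxx Dd1 by (simp add: mult_left_mono)
      moreover have "Dd s1 * (\<epsilon> * k\<^sup>2 * \<psi> s1 x1) \<le> Dm * (\<epsilon> * k\<^sup>2 * \<psi> s1 x1)"
        using Dd1 \<epsilon> \<psi>pos[of s1 x1] by (intro mult_right_mono) auto
      ultimately have "ws s1 x1 + \<epsilon> * A * \<psi> s1 x1 \<ge> \<epsilon> * \<psi> s1 x1 * (A - Dm * k\<^sup>2)"
        using d by (simp add: algebra_simps)
      moreover have "\<epsilon> * \<psi> s1 x1 * (A - Dm * k\<^sup>2) > 0" using \<epsilon> \<psi>pos[of s1 x1] by (simp add: A_def)
      ultimately have Ws: "0 < ws s1 x1 + \<epsilon> * A * \<psi> s1 x1" by linarith
      obtain dd where dd: "0 < dd" "\<forall>h>0. h < dd \<longrightarrow> W s1 x1 < W (s1 + h) x1"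
        using DERIV_pos_inc_right[OF dWs Ws] by blast
      obtain mm where mm: "0 < mm" "mm \<le> dd" "mm \<le> v - s1"
        using dd s1 s1v by (intro that[of "min dd (v - s1)"]) auto
      obtain m where m: "0 < m" "m < dd" "s1 + m \<le> v"
        using mm by (intro that[of "mm / 2"]) auto
      have "W s1 x1 < W (s1 + m) x1" using dd m by auto
      moreover have "W (s1 + m) x1 \<le> W s1 x1" using mx[of "s1 + m" x1] m s1 x1 by auto
      ultimately show False by simp
    qed
    moreover have "W s0 x0 \<le> W s1 x1" using mx[of s0 x0] s0 R0 by auto
    ultimately show ?thesis by (simp add: W_def)
  qed
  show ?thesis
  proof (rule ccontr)
    assume "\<not> w s0 x0 \<le> 0"
    hence wp: "0 < w s0 x0" by simp
    have "w s0 x0 \<le> (w s0 x0 / (2 * \<psi> s0 x0)) * \<psi> s0 x0"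
      by (rule main) (use wp \<psi>pos[of s0 x0] in simp)
    also have "\<dots> = w s0 x0 / 2" using \<psi>pos[of s0 x0] by (simp add: field_simps)
    finally show False using wp by simp
  qed
qed



lemma lip_from_deriv:
  fixes f f' :: "real \<Rightarrow> real"
  assumes d: "\<And>y. (f has_real_derivative f' y) (at y)" and b: "\<And>y. \<bar>f' y\<bar> \<le> B"
  shows "f x \<le> f 0 + B * \<bar>x\<bar>"
proof (cases "x = 0")
  case True thus ?thesis by simp
next
  case False
  show ?thesis
  proof (cases "0 < x")
    case True
    obtain z where z: "f x - f 0 = (x - 0) * f' z" using MVT2[of 0 x f f'] True d by blast
    have "f' z \<le> B" using b[of z] by (simp add: abs_le_iff)
    hence e2: "x * f' z \<le> x * B" using True by (intro mult_left_mono) auto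
    have e1: "f x - f 0 = x * f' z" using z by simp
    have "\<bar>x\<bar> = x" "x * B = B * x" using True by auto
    thus ?thesis using e1 e2 by linarith
  next
    case False
    hence x: "x < 0" using \<open>x \<noteq> 0\<close> by simp
    obtain z where z: "f 0 - f x = (0 - x) * f' z" using MVT2[of x 0 f f'] x d by blast
    have "- f' z \<le> B" using b[of z] by (simp add: abs_le_iff)
    hence e2: "(- x) * (- f' z) \<le> (- x) * B" using x by (intro mult_left_mono) auto
    have e1: "f 0 - f x = (- x) * f' z" using z by simp
    have "\<bar>x\<bar> = - x" "(- x) * B = B * (- x)" "(- x) * (- f' z) = - ((- x) * f' z)" using x by auto
    thus ?thesis using e1 e2 by (smt (verit))
  qed
qed

lemma phi_value:
  fixes \<beta> :: real and p :: nat and M :: "real measure" and v lam R :: real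
    and F :: "real \<Rightarrow> real \<Rightarrow> real"
  assumes p: "2 \<le> p" and P: "prob_space M" and S: "sets M = sets borel"
    and Rb: "AE a in M. \<bar>a\<bar> \<le> R" and R0: "0 \<le> R" and v0: "0 \<le> v"
    and sol: "parisi_sol \<beta> p v (\<lambda>s. 1) M lam F"
  shows "F 0 0 = ln (GG M (lam + \<beta>\<^sup>2 * real p * v ^ (p - 1) / 2) 0)"
proof -
  have Fc: "continuous_on ({0..v} \<times> UNIV) (\<lambda>(s, x). F s x)"
    and Fv: "\<forall>x. F v x = ln (\<integral>a. exp (x * a + lam * a\<^sup>2) \<partial>M)"
    and ex: "\<exists>Fs Fx Fxx B. \<forall>s\<in>{0<..<v}. \<forall>x.
          ((\<lambda>t. F t x) has_real_derivative Fs s x) (at s) \<and>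
          (F s has_real_derivative Fx s x) (at x) \<and>
          (Fx s has_real_derivative Fxx s x) (at x) \<and>
          Fs s x = - (\<beta>\<^sup>2 * xi2 p s / 2) * (Fxx s x + 1 * (Fx s x)\<^sup>2) \<and>
          \<bar>Fx s x\<bar> \<le> B"
    using sol unfolding parisi_sol_def by blast+
  obtain Fs Fx Fxx B where FD: "\<forall>s\<in>{0<..<v}. \<forall>x.
          ((\<lambda>t. F t x) has_real_derivative Fs s x) (at s) \<and>
          (F s has_real_derivative Fx s x) (at x) \<and>
          (Fx s has_real_derivative Fxx s x) (at x) \<and>
          Fs s x = - (\<beta>\<^sup>2 * xi2 p s / 2) * (Fxx s x + 1 * (Fx s x)\<^sup>2) \<and>
          \<bar>Fx s x\<bar> \<le> B"
    using ex by blast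
  have FvG: "F v x = ln (GG M lam x)" for x using Fv by (simp add: GG_def)
  define cc where "cc s = lam + \<beta>\<^sup>2 * (real p * v ^ (p - 1) - real p * s ^ (p - 1)) / 2" for s
  have p1: "p - 1 \<noteq> 0" using p by simp
  have cc0: "cc 0 = lam + \<beta>\<^sup>2 * real p * v ^ (p - 1) / 2" using p1 by (simp add: cc_def)
  have ccv: "cc v = lam" by (simp add: cc_def)
  show ?thesis
  proof (cases "v = 0")
    case True
    thus ?thesis using FvG[of 0] p1 by (simp add: power_0_left)
  next
    case False
    hence v: "0 < v" using v0 by simp
    define w where "w s x = exp (F s x) - GG M (cc s) x" for s x
    define Dd where "Dd s = \<beta>\<^sup>2 * xi2 p s / 2" for s
    define ws where "ws s x = exp (F s x) * Fs s x - GG2 M (cc s) x * (- Dd s)" for s x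
    define wx where "wx s x = exp (F s x) * Fx s x - GG1 M (cc s) x" for s x
    define wxx where "wxx s x = exp (F s x) * Fx s x * Fx s x + exp (F s x) * Fxx s x - GG2 M (cc s) x" for s x
    have dcc: "(cc has_real_derivative - Dd s) (at s)" for s
    proof -
      have ccf: "cc = (\<lambda>s. (lam + \<beta>\<^sup>2 * real p * v ^ (p - 1) / 2) - (\<beta>\<^sup>2 * real p / 2) * s ^ (p - 1))"
        by (auto simp: cc_def fun_eq_iff field_simps)
      have "(cc has_real_derivative 0 - (\<beta>\<^sup>2 * real p / 2) * (real (p - 1) * s ^ (p - 1 - Suc 0))) (at s)"
        unfolding ccf by (intro DERIV_diff DERIV_const DERIV_cmult DERIV_pow)
      moreover have "0 - (\<beta>\<^sup>2 * real p / 2) * (real (p - 1) * s ^ (p - 1 - Suc 0)) = - Dd s"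
        using p by (simp add: Dd_def xi2_def of_nat_diff field_simps numeral_2_eq_2)
      ultimately show ?thesis by simp
    qed
    have ders: "\<forall>s\<in>{0<..<v}. \<forall>x. ((\<lambda>t. w t x) has_real_derivative ws s x) (at s) \<and>
                 (w s has_real_derivative wx s x) (at x) \<and>
                 (wx s has_real_derivative wxx s x) (at x) \<and> ws s x = - Dd s * wxx s x"
    proof (intro ballI allI conjI)
      fix s x assume s: "s \<in> {0<..<v}"
      note fd = FD[rule_format, OF s, of x]
      show "((\<lambda>t. w t x) has_real_derivative ws s x) (at s)"
        unfolding w_def ws_def
        by (intro DERIV_diff DERIV_fun_exp fd[THEN conjunct1] DERIV_chain2[OF GG_dc[OF P S Rb R0] dcc])
      show "(w s has_real_derivative wx s x) (at x)"
        unfolding w_def wx_def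
        by (intro DERIV_diff DERIV_fun_exp fd[THEN conjunct2, THEN conjunct1] GG_dx[OF P S Rb R0])
      have "(wx s has_real_derivative (exp (F s x) * Fx s x) * Fx s x + Fxx s x * exp (F s x) - GG2 M (cc s) x) (at x)"
        unfolding wx_def
        by (intro DERIV_diff DERIV_mult DERIV_fun_exp fd[THEN conjunct2, THEN conjunct1]
              fd[THEN conjunct2, THEN conjunct2, THEN conjunct1] GG1_dx[OF P S Rb R0])
      thus "(wx s has_real_derivative wxx s x) (at x)" by (simp add: wxx_def algebra_simps)
      show "ws s x = - Dd s * wxx s x"
        using fd by (simp add: ws_def wxx_def Dd_def algebra_simps power2_eq_square)
    qed
    define Dm where "Dm = \<beta>\<^sup>2 * (real p * (real p - 1) * v ^ (p - 2)) / 2"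
    have Ddb: "\<forall>s\<in>{0<..<v}. 0 \<le> Dd s \<and> Dd s \<le> Dm"
    proof
      fix s assume s: "s \<in> {0<..<v}"
      have pp: "0 \<le> real p * (real p - 1)" using p by simp
      have "s ^ (p - 2) \<le> v ^ (p - 2)" using s by (intro power_mono) auto
      hence "real p * (real p - 1) * s ^ (p - 2) \<le> real p * (real p - 1) * v ^ (p - 2)"
        using pp by (intro mult_left_mono) auto
      moreover have "0 \<le> real p * (real p - 1) * s ^ (p - 2)" using pp s by simp
      ultimately show "0 \<le> Dd s \<and> Dd s \<le> Dm" unfolding Dd_def Dm_def xi2_def
        by (simp add: divide_right_mono mult_left_mono)
    qed
    have ccc: "continuous_on UNIV cc" unfolding cc_def by (auto intro!: continuous_intros)
    have contw: "continuous_on ({0..v} \<times> UNIV) (\<lambda>z. w (fst z) (snd z))"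
    proof -
      have c1: "continuous_on ({0..v} \<times> UNIV) (\<lambda>z. F (fst z) (snd z))"
        using Fc by (simp add: case_prod_unfold)
      have c2: "continuous_on ({0..v} \<times> UNIV) (\<lambda>z. GG M (fst (cc (fst z), snd z)) (snd (cc (fst z), snd z)))"
        by (rule continuous_on_compose2[OF GG_cont[OF P S Rb R0]])
           (auto intro!: continuous_intros continuous_on_compose2[OF ccc])
      show ?thesis unfolding w_def using c1 c2 by (auto intro!: continuous_intros)
    qed
    obtain Fmax where Fmax: "\<forall>s\<in>{0..v}. F s 0 \<le> Fmax"
    proof -
      have "continuous_on {0..v} (\<lambda>s. F s 0)"
        by (rule continuous_on_compose2[OF Fc, of _ "\<lambda>s. (s, 0)", simplified])
           (auto intro!: continuous_intros)
      then obtain s1 where "s1 \<in> {0..v}" "\<forall>y\<in>{0..v}. F y 0 \<le> F s1 0"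
        using continuous_attains_sup[of "{0..v}" "\<lambda>s. F s 0"] v by auto
      thus ?thesis using that by blast
    qed
    have B0: "0 \<le> B" using FD[rule_format, of "v/2" 0] v by auto
    have g1: "\<forall>s\<in>{0<..<v}. \<forall>x. w s x \<le> exp Fmax * exp (B * \<bar>x\<bar>)"
    proof (intro ballI allI)
      fix s x assume s: "s \<in> {0<..<v}"
      have "F s x \<le> F s 0 + B * \<bar>x\<bar>"
        by (rule lip_from_deriv[of "F s" "Fx s"]) (use FD s in auto)
      also have "\<dots> \<le> Fmax + B * \<bar>x\<bar>" using Fmax s by auto
      finally have "exp (F s x) \<le> exp Fmax * exp (B * \<bar>x\<bar>)" by (simp add: exp_add[symmetric])
      moreover have "0 < GG M (cc s) x" by (rule GG_pos[OF P S Rb R0])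
      ultimately show "w s x \<le> exp Fmax * exp (B * \<bar>x\<bar>)" by (simp add: w_def)
    qed
    define Cc where "Cc = \<bar>lam\<bar> + \<beta>\<^sup>2 * real p * v ^ (p - 1)"
    have g2: "\<forall>s\<in>{0<..<v}. \<forall>x. - w s x \<le> exp (Cc * R\<^sup>2) * exp (R * \<bar>x\<bar>)"
    proof (intro ballI allI)
      fix s x assume s: "s \<in> {0<..<v}"
      have sp: "s ^ (p - 1) \<le> v ^ (p - 1)" "0 \<le> s ^ (p - 1)" using s by (auto intro!: power_mono)
      have "\<bar>cc s\<bar> \<le> Cc"
      proof -
        have "0 \<le> \<beta>\<^sup>2 * (real p * v ^ (p - 1) - real p * s ^ (p - 1)) / 2"
          using sp by (simp add: mult_left_mono)
        moreover have "\<beta>\<^sup>2 * (real p * v ^ (p - 1) - real p * s ^ (p - 1)) / 2 \<le> \<beta>\<^sup>2 * real p * v ^ (p - 1)"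
        proof -
          have "real p * v ^ (p - 1) - real p * s ^ (p - 1) \<le> real p * v ^ (p - 1)" using sp by simp
          hence "\<beta>\<^sup>2 * (real p * v ^ (p - 1) - real p * s ^ (p - 1)) \<le> \<beta>\<^sup>2 * (real p * v ^ (p - 1))"
            by (intro mult_left_mono) auto
          moreover have "0 \<le> \<beta>\<^sup>2 * (real p * v ^ (p - 1))" using v by simp
          ultimately show ?thesis by simp
        qed
        ultimately show ?thesis unfolding cc_def Cc_def by linarith
      qed
      hence "\<bar>x\<bar> * R + \<bar>cc s\<bar> * R\<^sup>2 \<le> R * \<bar>x\<bar> + Cc * R\<^sup>2"
        by (simp add: mult_right_mono mult.commute)
      hence "exp (\<bar>x\<bar> * R + \<bar>cc s\<bar> * R\<^sup>2) \<le> exp (R * \<bar>x\<bar> + Cc * R\<^sup>2)" by simp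
      hence "GG M (cc s) x \<le> exp (R * \<bar>x\<bar> + Cc * R\<^sup>2)"
        using GG_bound[OF P S Rb R0, of "cc s" x] by linarith
      hence "GG M (cc s) x \<le> exp (Cc * R\<^sup>2) * exp (R * \<bar>x\<bar>)" by (simp add: exp_add[symmetric] add.commute)
      moreover have "0 < exp (F s x)" by simp
      ultimately show "- w s x \<le> exp (Cc * R\<^sup>2) * exp (R * \<bar>x\<bar>)" unfolding w_def by linarith
    qed
    have termw: "\<forall>x. w v x = 0"
    proof
      fix x
      have "0 < GG M lam x" by (rule GG_pos[OF P S Rb R0])
      thus "w v x = 0" by (simp add: w_def FvG ccv)
    qed
    have wint: "w s 0 = 0" if s: "s \<in> {0<..<v}" for s
    proof -
      have "w s 0 \<le> 0"
        by (rule max_principle[OF v contw _ ders Ddb g1 B0 s]) (use termw in simp)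
      moreover have "(\<lambda>s x. - w s x) s 0 \<le> 0"
      proof (rule max_principle[OF v _ _ _ Ddb g2 R0 s, where ws = "\<lambda>s x. - ws s x"
            and wx = "\<lambda>s x. - wx s x" and wxx = "\<lambda>s x. - wxx s x"])
        show "continuous_on ({0..v} \<times> UNIV) (\<lambda>z. - w (fst z) (snd z))"
          by (intro continuous_intros contw)
        show "\<forall>x. - w v x \<le> 0" using termw by simp
        show "\<forall>s\<in>{0<..<v}. \<forall>x. ((\<lambda>t. - w t x) has_real_derivative - ws s x) (at s) \<and>
              ((\<lambda>x. - w s x) has_real_derivative - wx s x) (at x) \<and>
              ((\<lambda>x. - wx s x) has_real_derivative - wxx s x) (at x) \<and> - ws s x = - Dd s * - wxx s x"
        proof (intro ballI allI conjI)
          fix s x assume s: "s \<in> {0<..<v}"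
          note d = ders[rule_format, OF s, of x]
          show "((\<lambda>t. - w t x) has_real_derivative - ws s x) (at s)" by (rule DERIV_minus[OF d[THEN conjunct1]])
          show "((\<lambda>x. - w s x) has_real_derivative - wx s x) (at x)" by (rule DERIV_minus[OF d[THEN conjunct2, THEN conjunct1]])
          show "((\<lambda>x. - wx s x) has_real_derivative - wxx s x) (at x)" by (rule DERIV_minus[OF d[THEN conjunct2, THEN conjunct2, THEN conjunct1]])
          show "- ws s x = - Dd s * - wxx s x" using d by simp
        qed
      qed
      ultimately show ?thesis by simp
    qed
    have w00: "w 0 0 = 0"
    proof -
      have cg: "continuous_on {0..v} (\<lambda>s. w s 0)"
        by (rule continuous_on_compose2[OF contw, of _ "\<lambda>s. (s, 0)", simplified])
           (auto intro!: continuous_intros)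
      have "closed {s \<in> {0..v}. w s 0 = 0}"
        by (rule continuous_closed_preimage_constant[OF cg]) simp
      moreover have "{0<..<v} \<subseteq> {s \<in> {0..v}. w s 0 = 0}" using wint by auto
      ultimately have "closure {0<..<v} \<subseteq> {s \<in> {0..v}. w s 0 = 0}" by (rule closure_minimal[rotated])
      moreover have "closure {0<..<v} = {0..v}" using v by simp
      moreover have "(0::real) \<in> {0..v}" using v by simp
      ultimately show ?thesis by blast
    qed
    have "0 < GG M (cc 0) 0" by (rule GG_pos[OF P S Rb R0])
    hence "exp (F 0 0) = GG M (cc 0) 0" using w00 by (simp add: w_def)
    hence "F 0 0 = ln (GG M (cc 0) 0)" by (metis ln_exp)
    thus ?thesis by (simp add: cc0)
  qed
qed



lemma xi2_integral:
  assumes p: "2 \<le> p" and v0: "0 \<le> v"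
  shows "integral {0..v} (\<lambda>s. 1 * xi2 p s * s) = (real p - 1) * v ^ p"
proof -
  have "((\<lambda>s. 1 * xi2 p s * s) has_integral ((real p - 1) * v ^ p - (real p - 1) * 0 ^ p)) {0..v}"
  proof (rule fundamental_theorem_of_calculus[OF v0])
    fix s assume s: "s \<in> {0..v}"
    have "((\<lambda>s. (real p - 1) * s ^ p) has_real_derivative (real p - 1) * (real p * s ^ (p - Suc 0))) (at s within {0..v})"
      by (intro DERIV_cmult DERIV_pow)
    moreover have "(real p - 1) * (real p * s ^ (p - Suc 0)) = 1 * xi2 p s * s"
    proof -
      have "s ^ (p - Suc 0) = s ^ (p - 2) * s" using p
        by (metis Suc_diff_Suc Suc_le_lessD diff_Suc_1 numeral_2_eq_2 power_Suc2)
      thus ?thesis by (simp add: xi2_def)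
    qed
    ultimately show "((\<lambda>s. (real p - 1) * s ^ p) has_vector_derivative 1 * xi2 p s * s) (at s within {0..v})"
      by (simp add: has_real_derivative_iff_has_vector_derivative[symmetric])
  qed
  moreover have "(0::real) ^ p = 0" using p by simp
  ultimately show ?thesis by (simp add: integral_unique)
qed

theorem lemma6:
  fixes \<beta> :: real and p :: nat and \<Lambda> :: "real set" and \<mu> :: "real measure"
    and v :: real and \<Phi> :: "real \<Rightarrow> real \<Rightarrow> real \<Rightarrow> real"
  assumes p: "p \<ge> 2"
    and \<beta>: "\<beta> > 0"
    and \<Lambda>: "\<Lambda> \<in> sets borel" "bounded \<Lambda>"
    and \<mu>: "prob_space \<mu>" "sets \<mu> = sets borel" "measure \<mu> \<Lambda> = 1"
    and centered: "(\<integral>a. a \<partial>\<mu>) = 0"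
    and v: "v \<in> {u\<^sup>2 | u. u \<in> \<Lambda>}"
    and \<Phi>: "\<And>lam. parisi_sol \<beta> p v (\<lambda>s. 1) \<mu> lam (\<Phi> lam)"
  shows "(v \<noteq> (\<integral>a. a\<^sup>2 \<partial>\<mu>) \<longrightarrow>
           (INF lam. ereal (parisi_Q \<beta> p v (\<lambda>s. 1) lam (\<Phi> lam 0 0))) < 0) \<and>
         (v = (\<integral>a. a\<^sup>2 \<partial>\<mu>) \<longrightarrow>
           (INF lam. ereal (parisi_Q \<beta> p v (\<lambda>s. 1) lam (\<Phi> lam 0 0))) = 0 \<and>
           parisi_Q \<beta> p v (\<lambda>s. 1) (- \<beta>\<^sup>2 * real p * (\<integral>a. a\<^sup>2 \<partial>\<mu>) ^ (p - 1) / 2)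
             (\<Phi> (- \<beta>\<^sup>2 * real p * (\<integral>a. a\<^sup>2 \<partial>\<mu>) ^ (p - 1) / 2) 0 0) = 0)"
proof -
  interpret prob_space \<mu> by (rule \<mu>(1))
  note P = \<mu>(1) and S = \<mu>(2)
  define vs where "vs = (\<integral>a. a\<^sup>2 \<partial>\<mu>)"
  obtain u where u: "u \<in> \<Lambda>" "v = u\<^sup>2" using v by blast
  have v0: "0 \<le> v" using u by simp
  obtain R where R: "\<forall>x\<in>\<Lambda>. norm x \<le> R" using \<Lambda>(2) unfolding bounded_iff by blast
  have R0: "0 \<le> R" using R u by (meson norm_ge_zero order_trans)
  have "AE a in \<mu>. a \<in> \<Lambda>" by (rule AE_prob_1) (use \<mu>(3) in simp)
  hence Rb: "AE a in \<mu>. \<bar>a\<bar> \<le> R" by eventually_elim (use R in auto)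
  define \<kappa> where "\<kappa> = \<beta>\<^sup>2 * real p * v ^ (p - 1) / 2"
  define f where "f c = ln (GG \<mu> c 0) - c * v" for c
  have Qf: "parisi_Q \<beta> p v (\<lambda>s. 1) lam (\<Phi> lam 0 0) = f (lam + \<kappa>)" for lam
  proof -
    have phi: "\<Phi> lam 0 0 = ln (GG \<mu> (lam + \<kappa>) 0)"
      unfolding \<kappa>_def by (rule phi_value[OF p P S Rb R0 v0 \<Phi>])
    have vp: "v ^ (p - 1) * v = v ^ p" using p
      by (metis Suc_diff_le diff_Suc_1 dual_order.trans one_le_numeral power_Suc2)
    show ?thesis
      unfolding parisi_Q_def parisi_P_def xi2_integral[OF p v0] phi f_def \<kappa>_def
      using vp by (simp add: algebra_simps)
  qed
  have GGc: "GG \<mu> c 0 = (\<integral>a. exp (c * a\<^sup>2) \<partial>\<mu>)" for c by (simp add: GG_def)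
  have GGpos: "0 < GG \<mu> c 0" for c by (rule GG_pos[OF P S Rb R0])
  have G00: "GG \<mu> 0 0 = 1" by (simp add: GG_def prob_space.prob_space[OF P])
  have f0: "f 0 = 0" by (simp add: f_def G00)
  have GG200: "GG2 \<mu> 0 0 = vs" by (simp add: GG2_def vs_def)
  have a2i: "integrable \<mu> (\<lambda>a. a\<^sup>2)"
    by (rule int_bound(1)[OF P S _ a2b[OF P S Rb R0]]) (auto intro!: continuous_intros)
  have lower: "exp (c * vs) \<le> GG \<mu> c 0" for c
  proof -
    have bb: "AE a in \<mu>. \<bar>exp (c * a\<^sup>2)\<bar> \<le> exp (\<bar>c\<bar> * R\<^sup>2)" by (rule expca_b[OF P S Rb R0])
    have ei: "integrable \<mu> (\<lambda>a. exp (c * a\<^sup>2))"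
      by (rule int_bound(1)[OF P S _ bb]) (auto intro!: continuous_intros)
    have li: "integrable \<mu> (\<lambda>a. exp (c * vs) * (1 - c * vs) + exp (c * vs) * c * a\<^sup>2)"
      using a2i by simp
    have "(\<integral>a. exp (c * vs) * (1 - c * vs) + exp (c * vs) * c * a\<^sup>2 \<partial>\<mu>)
        = exp (c * vs) * (1 - c * vs) + exp (c * vs) * c * vs"
      using a2i by (simp add: vs_def prob_space.prob_space[OF P])
    also have "\<dots> = exp (c * vs)" by (simp add: algebra_simps)
    finally have eq: "(\<integral>a. exp (c * vs) * (1 - c * vs) + exp (c * vs) * c * a\<^sup>2 \<partial>\<mu>) = exp (c * vs)" .
    have "(\<integral>a. exp (c * vs) * (1 - c * vs) + exp (c * vs) * c * a\<^sup>2 \<partial>\<mu>) \<le> (\<integral>a. exp (c * a\<^sup>2) \<partial>\<mu>)"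
    proof (rule integral_mono[OF li ei])
      fix a
      have "1 + (c * a\<^sup>2 - c * vs) \<le> exp (c * a\<^sup>2 - c * vs)" by (rule exp_ge_add_one_self)
      hence "exp (c * vs) * (1 + (c * a\<^sup>2 - c * vs)) \<le> exp (c * vs) * exp (c * a\<^sup>2 - c * vs)" by simp
      thus "exp (c * vs) * (1 - c * vs) + exp (c * vs) * c * a\<^sup>2 \<le> exp (c * a\<^sup>2)"
        by (simp add: exp_diff algebra_simps)
    qed
    thus ?thesis using eq GGc by simp
  qed
  show ?thesis
  proof (intro conjI impI)
    assume vne: "v \<noteq> (\<integral>a. a\<^sup>2 \<partial>\<mu>)"
    hence vne': "vs - v \<noteq> 0" by (simp add: vs_def)
    have df: "(f has_real_derivative (1 / GG \<mu> 0 0 * GG2 \<mu> 0 0 - v)) (at 0)"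
    proof -
      have "((\<lambda>c. ln (GG \<mu> c 0)) has_real_derivative 1 / GG \<mu> 0 0 * GG2 \<mu> 0 0) (at 0)"
        by (rule DERIV_chain2[OF DERIV_ln_divide[OF GGpos] GG_dc[OF P S Rb R0]])
      hence "((\<lambda>c. ln (GG \<mu> c 0) - c * v) has_real_derivative 1 / GG \<mu> 0 0 * GG2 \<mu> 0 0 - 1 * v) (at 0)"
        by (intro DERIV_diff DERIV_cmult_right DERIV_ident)
      thus ?thesis by (simp add: f_def[abs_def])
    qed
    hence df': "(f has_real_derivative (vs - v)) (at 0)" by (simp add: G00 GG200)
    obtain c where fc: "f c < 0"
    proof (cases "0 < vs - v")
      case True
      obtain d where d: "0 < d" "\<forall>h>0. h < d \<longrightarrow> f (0 - h) < f 0" using DERIV_pos_inc_left[OF df' True] by blast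
      show ?thesis using d f0 by (intro that[of "0 - d / 2"]) auto
    next
      case False
      hence neg: "vs - v < 0" using vne' by simp
      obtain d where d: "0 < d" "\<forall>h>0. h < d \<longrightarrow> f 0 > f (0 + h)" using DERIV_neg_dec_right[OF df' neg] by blast
      show ?thesis using d f0 by (intro that[of "0 + d / 2"]) auto
    qed
    have "(INF lam. ereal (parisi_Q \<beta> p v (\<lambda>s. 1) lam (\<Phi> lam 0 0))) \<le> ereal (parisi_Q \<beta> p v (\<lambda>s. 1) (c - \<kappa>) (\<Phi> (c - \<kappa>) 0 0))"
      by (rule INF_lower) simp
    also have "\<dots> = ereal (f c)" by (simp add: Qf)
    also have "\<dots> < 0" using fc by simp
    finally show "(INF lam. ereal (parisi_Q \<beta> p v (\<lambda>s. 1) lam (\<Phi> lam 0 0))) < 0" .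
  next
    assume veq: "v = (\<integral>a. a\<^sup>2 \<partial>\<mu>)"
    hence veq': "v = vs" by (simp add: vs_def)
    have fpos: "0 \<le> f c" for c
    proof -
      have "ln (exp (c * vs)) \<le> ln (GG \<mu> c 0)" using lower[of c] GGpos[of c] by (subst ln_le_cancel_iff) auto
      thus ?thesis by (simp add: f_def veq')
    qed
    have lstar: "- \<beta>\<^sup>2 * real p * (\<integral>a. a\<^sup>2 \<partial>\<mu>) ^ (p - 1) / 2 + \<kappa> = 0"
      by (simp add: \<kappa>_def veq)
    show Qs: "parisi_Q \<beta> p v (\<lambda>s. 1) (- \<beta>\<^sup>2 * real p * (\<integral>a. a\<^sup>2 \<partial>\<mu>) ^ (p - 1) / 2)
             (\<Phi> (- \<beta>\<^sup>2 * real p * (\<integral>a. a\<^sup>2 \<partial>\<mu>) ^ (p - 1) / 2) 0 0) = 0"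
      by (simp only: Qf lstar f0)
    show "(INF lam. ereal (parisi_Q \<beta> p v (\<lambda>s. 1) lam (\<Phi> lam 0 0))) = 0"
    proof (rule antisym)
      have "(INF lam. ereal (parisi_Q \<beta> p v (\<lambda>s. 1) lam (\<Phi> lam 0 0))) \<le>
          ereal (parisi_Q \<beta> p v (\<lambda>s. 1) (- \<beta>\<^sup>2 * real p * (\<integral>a. a\<^sup>2 \<partial>\<mu>) ^ (p - 1) / 2)
             (\<Phi> (- \<beta>\<^sup>2 * real p * (\<integral>a. a\<^sup>2 \<partial>\<mu>) ^ (p - 1) / 2) 0 0))"
        by (rule INF_lower) simp
      thus "(INF lam. ereal (parisi_Q \<beta> p v (\<lambda>s. 1) lam (\<Phi> lam 0 0))) \<le> 0" using Qs zero_ereal_def by (simp only:)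
      show "0 \<le> (INF lam. ereal (parisi_Q \<beta> p v (\<lambda>s. 1) lam (\<Phi> lam 0 0)))"
        by (rule INF_greatest) (simp add: Qf fpos)
    qed
  qed
qed

end
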